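(* Let $G$ be a finite simple graph, $\mathbb{K}$ a field, $d$ a nonnegative integer, and let $z$ be a $d$-cycle of $\mathrm{cl}(G)$ (over $\mathbb{K}$) which is $d$-minimal for $G$. Let $v\in z_0$. Then the $(d-1)$-cycle $\mathrm{lk}_z(v)$ is homologically nontrivial in $\mathrm{cl}(G[N_z(v)])$.
   Context: $\mathrm{cl}(G)$ is the clique complex of $G$. A $d$-cycle $z=\sum_\sigma a_\sigma\sigma$ of $\mathrm{cl}(G)$ is a nontrivial homology $d$-cycle if it is not a boundary; its vertex support $z_0$ is the set of vertices lying in some $d$-face $\sigma$ with $a_\sigma\neq0$. A nontrivial homology $d$-cycle $z$ is $d$-minimal for $G$ if no proper subset of $z_0$ is the vertex support of a nontrivial homology $d$-cycle of $\mathrm{cl}(G)$. For $v\in z_0$, $N_z(v)=N_G(v)\cap z_0$ (with $N_G(v)$ the set of neighbors of $v$), $G[A]$ is the induced subgraph on $A$, and $\mathrm{lk}_z(v)$ is the $(d-1)$-chain obtained from $z$ by the link map, i.e. the chain $\sum_{\sigma\ni v}\pm a_\sigma(\sigma\setminus\{v\})$ (with the sign making $\partial$ of the star part of $z$ compatible), which is a $(d-1)$-cycle supported in $\mathrm{cl}(G[N_z(v)])$. *)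

theory Defs
  imports Main
begin

text \<open>Simplices of a clique complex are finite cliques, represented as sets; the empty
 set is the unique (-1)-simplex (reduced/augmented chain complex). A simplex
 with n+1 vertices is a d-simplex with d = n; we index chain groups by the
 cardinality of simplices. Orientation: each simplex is oriented by the linear
 order of the vertex type.\<close>

definition simple_graph :: "'a set \<Rightarrow> ('a \<Rightarrow> 'a \<Rightarrow> bool) \<Rightarrow> bool" where
  "simple_graph V E \<longleftrightarrow> finite V \<and> (\<forall>x y. E x y \<longrightarrow> E y x) \<and> (\<forall>x. \<not> E x x)
     \<and> (\<forall>x y. E x y \<longrightarrow> x \<in> V \<and> y \<in> V)"

definition cl_faces :: "'a set \<Rightarrow> ('a \<Rightarrow> 'a \<Rightarrow> bool) \<Rightarrow> nat \<Rightarrow> 'a set set" where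
  "cl_faces A E n = {\<sigma>. finite \<sigma> \<and> \<sigma> \<subseteq> A \<and> card \<sigma> = n \<and> (\<forall>x\<in>\<sigma>. \<forall>y\<in>\<sigma>. x \<noteq> y \<longrightarrow> E x y)}"

definition cl_chain :: "'a set \<Rightarrow> ('a \<Rightarrow> 'a \<Rightarrow> bool) \<Rightarrow> nat \<Rightarrow> ('a set \<Rightarrow> 'k::field) \<Rightarrow> bool" where
  "cl_chain A E n c \<longleftrightarrow> (\<forall>\<sigma>. c \<sigma> \<noteq> 0 \<longrightarrow> \<sigma> \<in> cl_faces A E n)"

text \<open>Simplicial boundary: the face obtained by deleting the i-th vertex (0-based, in
 increasing order) has sign (-1)^i.\<close>
definition cl_bd :: "'a::linorder set \<Rightarrow> ('a set \<Rightarrow> 'k::field) \<Rightarrow> ('a set \<Rightarrow> 'k)" where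
  "cl_bd A c = (\<lambda>\<tau>. \<Sum>w\<in>A - \<tau>. (-1) ^ card {u\<in>\<tau>. u < w} * c (insert w \<tau>))"

definition cl_cycle :: "'a::linorder set \<Rightarrow> ('a \<Rightarrow> 'a \<Rightarrow> bool) \<Rightarrow> nat \<Rightarrow> ('a set \<Rightarrow> 'k::field) \<Rightarrow> bool" where
  "cl_cycle A E n c \<longleftrightarrow> cl_chain A E n c \<and> cl_bd A c = (\<lambda>_. 0)"

definition cl_boundary :: "'a::linorder set \<Rightarrow> ('a \<Rightarrow> 'a \<Rightarrow> bool) \<Rightarrow> nat \<Rightarrow> ('a set \<Rightarrow> 'k::field) \<Rightarrow> bool" where
  "cl_boundary A E n c \<longleftrightarrow> (\<exists>b. cl_chain A E (Suc n) b \<and> cl_bd A b = c)"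

definition nontrivial_cycle :: "'a::linorder set \<Rightarrow> ('a \<Rightarrow> 'a \<Rightarrow> bool) \<Rightarrow> nat \<Rightarrow> ('a set \<Rightarrow> 'k::field) \<Rightarrow> bool" where
  "nontrivial_cycle A E n c \<longleftrightarrow> cl_cycle A E n c \<and> \<not> cl_boundary A E n c"

definition vsupp :: "('a set \<Rightarrow> 'k::zero) \<Rightarrow> 'a set" where
  "vsupp z = \<Union>{\<sigma>. z \<sigma> \<noteq> 0}"

definition d_minimal :: "'a::linorder set \<Rightarrow> ('a \<Rightarrow> 'a \<Rightarrow> bool) \<Rightarrow> nat \<Rightarrow> ('a set \<Rightarrow> 'k::field) \<Rightarrow> bool" where
  "d_minimal V E d z \<longleftrightarrow> nontrivial_cycle V E (Suc d) z \<and>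
     (\<forall>z' :: 'a set \<Rightarrow> 'k. nontrivial_cycle V E (Suc d) z' \<longrightarrow> \<not> (vsupp z' \<subset> vsupp z))"

definition Nz :: "('a \<Rightarrow> 'a \<Rightarrow> bool) \<Rightarrow> ('a set \<Rightarrow> 'k::zero) \<Rightarrow> 'a \<Rightarrow> 'a set" where
  "Nz E z v = {u \<in> vsupp z. E v u}"

definition lk :: "('a set \<Rightarrow> 'k::field) \<Rightarrow> 'a::linorder \<Rightarrow> ('a set \<Rightarrow> 'k)" where
  "lk z v = (\<lambda>\<tau>. if v \<in> \<tau> then 0 else (-1) ^ card {u\<in>\<tau>. u < v} * z (insert v \<tau>))"

end

theory Submission
  imports Defs
begin

definition eps :: "'a::linorder set \<Rightarrow> 'a \<Rightarrow> 'k::field" where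
  "eps \<tau> w = (-1) ^ card {u\<in>\<tau>. u < w}"

lemma card_lt_insert:
  assumes "finite \<tau>" "w \<notin> \<tau>"
  shows "card {u\<in>insert w \<tau>. u < x} = (if w < x then Suc (card {u\<in>\<tau>. u < x}) else card {u\<in>\<tau>. u < x})"
proof (cases "w < x")
  case True
  then have "{u\<in>insert w \<tau>. u < x} = insert w {u\<in>\<tau>. u < x}" by auto
  then show ?thesis using True assms by simp
next
  case False
  then have "{u\<in>insert w \<tau>. u < x} = {u\<in>\<tau>. u < x}" by auto
  then show ?thesis using False by simp
qed

lemma eps_insert:
  assumes "finite \<tau>" "w \<notin> \<tau>"
  shows "(eps (insert w \<tau>) x :: 'k::field) = (if w < x then - eps \<tau> x else eps \<tau> x)"
  using card_lt_insert[OF assms, of x] by (simp add: eps_def)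

lemma eps_sq: "(eps \<tau> w :: 'k::field) * eps \<tau> w = 1"
  unfolding eps_def by (simp add: power_mult_distrib[symmetric])

lemma eps_swap:
  assumes "finite \<sigma>" "v \<notin> \<sigma>" "w \<notin> \<sigma>" "w \<noteq> v"
  shows "(eps \<sigma> w :: 'k::field) * eps (insert w \<sigma>) v = - (eps \<sigma> v * eps (insert v \<sigma>) w)"
  using assms by (cases "w < v") (auto simp: eps_insert)

lemma eps_swap2:
  assumes "finite \<sigma>" "v \<notin> \<sigma>" "w \<notin> \<sigma>" "w \<noteq> v"
  shows "(eps (insert v \<sigma>) w :: 'k::field) * eps (insert w \<sigma>) v = - (eps \<sigma> v * eps \<sigma> w)"
  using assms by (cases "w < v") (auto simp: eps_insert)

lemma bd_eps: "cl_bd A c = (\<lambda>\<tau>. \<Sum>w\<in>A - \<tau>. eps \<tau> w * c (insert w \<tau>))"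
  by (simp add: cl_bd_def eps_def)

lemma antisym_sum:
  fixes f :: "'a \<Rightarrow> 'a \<Rightarrow> 'k::field"
  assumes "finite B" "\<And>w x. w \<noteq> x \<Longrightarrow> f x w = - f w x"
  shows "(\<Sum>w\<in>B. \<Sum>x\<in>B - {w}. f w x) = 0"
  using assms(1)
proof (induction B rule: finite_induct)
  case empty then show ?case by simp
next
  case (insert a B)
  have 1: "(\<Sum>x\<in>insert a B - {a}. f a x) = (\<Sum>x\<in>B. f a x)"
    using insert by (simp add: insert_Diff_if)
  have 2: "(\<Sum>x\<in>insert a B - {w}. f w x) = f w a + (\<Sum>x\<in>B - {w}. f w x)" if "w \<in> B" for w
  proof -
    have "insert a B - {w} = insert a (B - {w})" using that insert by auto
    then show ?thesis using insert by simp
  qed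
  have "(\<Sum>w\<in>insert a B. \<Sum>x\<in>insert a B - {w}. f w x)
      = (\<Sum>x\<in>B. f a x) + (\<Sum>w\<in>B. f w a + (\<Sum>x\<in>B - {w}. f w x))"
    using insert 1 2 by simp
  also have "\<dots> = (\<Sum>x\<in>B. f a x) + (\<Sum>w\<in>B. f w a)"
    using insert.IH by (simp add: sum.distrib)
  also have "\<dots> = 0"
  proof -
    have "(\<Sum>w\<in>B. f w a) = (\<Sum>w\<in>B. - f a w)"
    proof (intro sum.cong refl)
      fix w assume "w \<in> B"
      then have "a \<noteq> w" using insert by auto
      then show "f w a = - f a w" using assms(2) by blast
    qed
    then show ?thesis by (simp add: sum_negf)
  qed
  finally show ?case .
qed

lemma bd_bd:
  fixes c :: "'a::linorder set \<Rightarrow> 'k::field"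
  assumes "finite A" "\<And>\<sigma>. c \<sigma> \<noteq> 0 \<Longrightarrow> finite \<sigma>"
  shows "cl_bd A (cl_bd A c) = (\<lambda>_. 0)"
proof
  fix \<tau>
  show "cl_bd A (cl_bd A c) \<tau> = 0"
  proof (cases "finite \<tau>")
    case False
    then have "c (insert x (insert w \<tau>)) = 0" for x w using assms(2) by fastforce
    then show ?thesis by (simp add: cl_bd_def)
  next
    case True
    define f where "f w x = eps \<tau> w * eps \<tau> x * (if w < x then -1 else 1) * c (insert x (insert w \<tau>))" for w x
    have "cl_bd A (cl_bd A c) \<tau> = (\<Sum>w\<in>A - \<tau>. \<Sum>x\<in>(A - \<tau>) - {w}. f w x)"
    proof (unfold bd_eps, intro sum.cong refl)
      fix w assume w: "w \<in> A - \<tau>"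
      have eq: "A - insert w \<tau> = (A - \<tau>) - {w}" by auto
      have e: "eps (insert w \<tau>) x * c (insert x (insert w \<tau>)) = eps \<tau> x * ((if w < x then -1 else 1) * c (insert x (insert w \<tau>)))" for x
        using w True by (cases "w < x") (simp_all add: eps_insert)
      have "(\<Sum>x\<in>A - insert w \<tau>. eps (insert w \<tau>) x * c (insert x (insert w \<tau>)))
          = (\<Sum>x\<in>(A - \<tau>) - {w}. eps \<tau> x * ((if w < x then -1 else 1) * c (insert x (insert w \<tau>))))"
        unfolding eq by (intro sum.cong refl e)
      then show "eps \<tau> w * (\<Sum>x\<in>A - insert w \<tau>. eps (insert w \<tau>) x * c (insert x (insert w \<tau>)))
          = (\<Sum>x\<in>(A - \<tau>) - {w}. f w x)"
        by (simp add: sum_distrib_left f_def mult.assoc del: mult_minus_left mult_1)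
    qed
    also have "\<dots> = 0"
    proof (rule antisym_sum)
      show "finite (A - \<tau>)" using assms by simp
      fix w x :: 'a assume "w \<noteq> x"
      then show "f x w = - f w x"
        by (cases "w < x") (auto simp: f_def insert_commute)
    qed
    finally show ?thesis .
  qed
qed

lemma bd_add: "cl_bd A (\<lambda>\<sigma>. f \<sigma> + g \<sigma>) \<tau> = cl_bd A f \<tau> + cl_bd A g \<tau>"
  by (simp add: cl_bd_def sum.distrib distrib_left)

lemma bd_diff: "cl_bd A (\<lambda>\<sigma>. f \<sigma> - g \<sigma>) \<tau> = cl_bd A f \<tau> - cl_bd A g \<tau>"
  by (simp add: cl_bd_def sum_subtractf right_diff_distrib)

lemma faces_sub: "\<sigma> \<in> cl_faces A E n \<Longrightarrow> A \<subseteq> B \<Longrightarrow> \<sigma> \<in> cl_faces B E n"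
  by (auto simp: cl_faces_def)

theorem lemma3p2:
  fixes V :: "'a::linorder set" and E :: "'a \<Rightarrow> 'a \<Rightarrow> bool"
    and z :: "'a set \<Rightarrow> 'k::field" and d :: nat and v :: 'a
  assumes "simple_graph V E"
    and "d_minimal V E d z"
    and "v \<in> vsupp z"
  shows "nontrivial_cycle (Nz E z v) E d (lk z v)"
proof -
  have finV: "finite V" and symE: "\<And>x y. E x y \<Longrightarrow> E y x" and irr: "\<And>x. \<not> E x x"
    using assms(1) by (auto simp: simple_graph_def)
  have zch: "\<And>\<sigma>. z \<sigma> \<noteq> 0 \<Longrightarrow> \<sigma> \<in> cl_faces V E (Suc d)"
    and zbd: "cl_bd V z = (\<lambda>_. 0)" and znb: "\<not> cl_boundary V E (Suc d) z"
    and zmin: "\<And>z' :: 'a set \<Rightarrow> 'k. nontrivial_cycle V E (Suc d) z' \<Longrightarrow> \<not> (vsupp z' \<subset> vsupp z)"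
    using assms(2) by (auto simp: d_minimal_def nontrivial_cycle_def cl_cycle_def cl_chain_def)
  define N where "N = Nz E z v"
  have vsV: "vsupp z \<subseteq> V" using zch by (auto simp: vsupp_def cl_faces_def)
  have vV: "v \<in> V" using assms(3) vsV by auto
  have vN: "v \<notin> N" using irr by (auto simp: N_def Nz_def)
  have NV: "N \<subseteq> V" using vsV by (auto simp: N_def Nz_def)
  have Nvs: "N \<subseteq> vsupp z" by (auto simp: N_def Nz_def)
  have zfin: "\<And>\<sigma>. z \<sigma> \<noteq> 0 \<Longrightarrow> finite \<sigma>" using zch by (auto simp: cl_faces_def)
  have zN: "w \<in> N" if "z \<sigma> \<noteq> 0" "v \<in> \<sigma>" "w \<in> \<sigma>" "w \<noteq> v" for \<sigma> w
  proof -
    have "E v w" using zch[OF that(1)] that by (auto simp: cl_faces_def)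
    moreover have "w \<in> vsupp z" using that by (auto simp: vsupp_def)
    ultimately show ?thesis by (auto simp: N_def Nz_def)
  qed
  have lkdef: "lk z v \<tau> = (if v \<in> \<tau> then 0 else eps \<tau> v * z (insert v \<tau>))" for \<tau>
    by (simp add: lk_def eps_def)
  have chain: "cl_chain N E d (lk z v)"
    unfolding cl_chain_def
  proof (intro allI impI)
    fix \<tau> assume "lk z v \<tau> \<noteq> 0"
    then have v\<tau>: "v \<notin> \<tau>" and nz: "z (insert v \<tau>) \<noteq> 0" by (auto simp: lkdef split: if_splits)
    have F: "insert v \<tau> \<in> cl_faces V E (Suc d)" using zch[OF nz] .
    have "\<tau> \<subseteq> N" using zN[OF nz] v\<tau> by auto
    then show "\<tau> \<in> cl_faces N E d" using F v\<tau> by (auto simp: cl_faces_def)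
  qed
  have bdlk: "cl_bd N (lk z v) = (\<lambda>_. 0)"
  proof
    fix \<sigma>
    show "cl_bd N (lk z v) \<sigma> = 0"
    proof (cases "v \<in> \<sigma>")
      case True
      then show ?thesis by (simp add: cl_bd_def lkdef)
    next
      case vs: False
      show ?thesis
      proof (cases "finite \<sigma>")
        case False
        have z0: "z (insert v (insert w \<sigma>)) = 0" for w using zfin False by fastforce
        show ?thesis unfolding bd_eps by (intro sum.neutral ballI) (simp add: lkdef z0)
      next
        case fin: True
        have "cl_bd N (lk z v) \<sigma> = (\<Sum>w\<in>N - \<sigma>. eps \<sigma> w * (eps (insert w \<sigma>) v * z (insert v (insert w \<sigma>))))"
          unfolding bd_eps using vN vs by (intro sum.cong refl) (auto simp: lkdef)
        also have "\<dots> = (\<Sum>w\<in>N - \<sigma>. - eps \<sigma> v * (eps (insert v \<sigma>) w * z (insert w (insert v \<sigma>))))"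
        proof (intro sum.cong refl)
          fix w assume w: "w \<in> N - \<sigma>"
          then have "w \<noteq> v" using vN by auto
          then have "eps \<sigma> w * eps (insert w \<sigma>) v = - (eps \<sigma> v * eps (insert v \<sigma>) w :: 'k)"
            using eps_swap[OF fin vs] w by auto
          then show "eps \<sigma> w * (eps (insert w \<sigma>) v * z (insert v (insert w \<sigma>))) =
              - eps \<sigma> v * (eps (insert v \<sigma>) w * z (insert w (insert v \<sigma>)))"
            by (simp add: insert_commute mult.assoc[symmetric])
        qed
        also have "\<dots> = - eps \<sigma> v * (\<Sum>w\<in>N - \<sigma>. eps (insert v \<sigma>) w * z (insert w (insert v \<sigma>)))"
          by (simp add: sum_distrib_left)
        also have "(\<Sum>w\<in>N - \<sigma>. eps (insert v \<sigma>) w * z (insert w (insert v \<sigma>)))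
            = (\<Sum>w\<in>V - insert v \<sigma>. eps (insert v \<sigma>) w * z (insert w (insert v \<sigma>)))"
        proof (rule sum.mono_neutral_left)
          show "finite (V - insert v \<sigma>)" using finV by simp
          show "N - \<sigma> \<subseteq> V - insert v \<sigma>" using NV vN by auto
          show "\<forall>w\<in>V - insert v \<sigma> - (N - \<sigma>). eps (insert v \<sigma>) w * z (insert w (insert v \<sigma>)) = 0"
          proof
            fix w assume w: "w \<in> V - insert v \<sigma> - (N - \<sigma>)"
            have "z (insert w (insert v \<sigma>)) = 0"
            proof (rule ccontr)
              assume "z (insert w (insert v \<sigma>)) \<noteq> 0"
              from zN[OF this] w show False by auto
            qed
            then show "eps (insert v \<sigma>) w * z (insert w (insert v \<sigma>)) = 0" by simp
          qed
        qed
        also have "\<dots> = cl_bd V z (insert v \<sigma>)" by (simp add: bd_eps)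
        also have "\<dots> = 0" using zbd by simp
        finally show ?thesis by simp
      qed
    qed
  qed
  have nb: "\<not> cl_boundary N E d (lk z v)"
  proof
    assume "cl_boundary N E d (lk z v)"
    then obtain b where bch: "cl_chain N E (Suc d) b" and bbd: "cl_bd N b = lk z v"
      by (auto simp: cl_boundary_def)
    have bF: "\<And>\<rho>. b \<rho> \<noteq> 0 \<Longrightarrow> \<rho> \<in> cl_faces N E (Suc d)" using bch by (auto simp: cl_chain_def)
    define c where "c = (\<lambda>\<rho>. if v \<in> \<rho> then eps (\<rho> - {v}) v * b (\<rho> - {v}) else (0::'k))"
    define z' where "z' = (\<lambda>\<tau>. z \<tau> + cl_bd V c \<tau>)"
    have cch: "c \<rho> \<noteq> 0 \<Longrightarrow> \<rho> \<in> cl_faces V E (Suc (Suc d))" for \<rho>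
    proof -
      assume "c \<rho> \<noteq> 0"
      then have v\<rho>: "v \<in> \<rho>" and nb0: "b (\<rho> - {v}) \<noteq> 0" by (auto simp: c_def split: if_splits)
      have F: "\<rho> - {v} \<in> cl_faces N E (Suc d)" using bF[OF nb0] .
      have r: "\<rho> = insert v (\<rho> - {v})" using v\<rho> by auto
      have vn: "v \<notin> \<rho> - {v}" by simp
      have Ev: "\<And>u. u \<in> \<rho> - {v} \<Longrightarrow> E v u" using F by (auto simp: cl_faces_def N_def Nz_def)
      define r' where "r' = \<rho> - {v}"
      have f: "finite r'" "r' \<subseteq> N" "card r' = Suc d" and cl: "\<And>x y. x \<in> r' \<Longrightarrow> y \<in> r' \<Longrightarrow> x \<noteq> y \<Longrightarrow> E x y"
        using F by (auto simp: cl_faces_def r'_def)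
      have "insert v r' \<in> cl_faces V E (Suc (Suc d))"
        unfolding cl_faces_def
      proof (intro CollectI conjI ballI impI)
        show "finite (insert v r')" using f by simp
        show "insert v r' \<subseteq> V" using f NV vV by auto
        have "v \<notin> r'" by (simp add: r'_def)
        then show "card (insert v r') = Suc (Suc d)" using f by simp
        fix x y assume "x \<in> insert v r'" "y \<in> insert v r'" "x \<noteq> y"
        then show "E x y" using cl[of x y] Ev[of x] Ev[of y] symE[of v x] unfolding r'_def
          by (cases "x = v"; cases "y = v") auto
      qed
      then show ?thesis using r by (simp add: r'_def)
    qed
    have cfin: "\<And>\<rho>. c \<rho> \<noteq> 0 \<Longrightarrow> finite \<rho>" using cch by (auto simp: cl_faces_def)
    have bdc_out: "cl_bd V c \<tau> = b \<tau>" if v\<tau>: "v \<notin> \<tau>" for \<tau>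
    proof -
      have "cl_bd V c \<tau> = (\<Sum>w\<in>V - \<tau>. if w = v then b \<tau> else 0)"
        unfolding bd_eps
      proof (intro sum.cong refl)
        fix w assume "w \<in> V - \<tau>"
        show "eps \<tau> w * c (insert w \<tau>) = (if w = v then b \<tau> else 0)"
        proof (cases "w = v")
          case True
          have "insert v \<tau> - {v} = \<tau>" using v\<tau> by auto
          then show ?thesis using True by (simp add: c_def mult.assoc[symmetric] eps_sq)
        next
          case False
          then show ?thesis using v\<tau> by (simp add: c_def)
        qed
      qed
      also have "\<dots> = b \<tau>" using vV v\<tau> finV by simp
      finally show ?thesis .
    qed
    have bdc_in: "cl_bd V c (insert v \<sigma>) = - z (insert v \<sigma>)" if vs: "v \<notin> \<sigma>" for \<sigma>
    proof (cases "finite \<sigma>")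
      case False
      then have "z (insert v \<sigma>) = 0" using zfin by fastforce
      moreover have "c (insert w (insert v \<sigma>)) = 0" for w using cfin False by fastforce
      ultimately show ?thesis by (simp add: cl_bd_def)
    next
      case fin: True
      have "cl_bd V c (insert v \<sigma>) = (\<Sum>w\<in>V - insert v \<sigma>. - eps \<sigma> v * (eps \<sigma> w * b (insert w \<sigma>)))"
        unfolding bd_eps
      proof (intro sum.cong refl)
        fix w assume w: "w \<in> V - insert v \<sigma>"
        have e1: "insert w (insert v \<sigma>) - {v} = insert w \<sigma>" using w vs by auto
        have "eps (insert v \<sigma>) w * eps (insert w \<sigma>) v = - (eps \<sigma> v * eps \<sigma> w :: 'k)"
          using eps_swap2[OF fin vs] w by auto
        then show "eps (insert v \<sigma>) w * c (insert w (insert v \<sigma>)) = - eps \<sigma> v * (eps \<sigma> w * b (insert w \<sigma>))"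
          by (simp add: c_def e1 mult.assoc[symmetric])
      qed
      also have "\<dots> = - eps \<sigma> v * (\<Sum>w\<in>V - insert v \<sigma>. eps \<sigma> w * b (insert w \<sigma>))"
        by (simp add: sum_distrib_left)
      also have "(\<Sum>w\<in>V - insert v \<sigma>. eps \<sigma> w * b (insert w \<sigma>)) = (\<Sum>w\<in>N - \<sigma>. eps \<sigma> w * b (insert w \<sigma>))"
      proof (rule sum.mono_neutral_right)
        show "finite (V - insert v \<sigma>)" using finV by simp
        show "N - \<sigma> \<subseteq> V - insert v \<sigma>" using NV vN by auto
        show "\<forall>w\<in>V - insert v \<sigma> - (N - \<sigma>). eps \<sigma> w * b (insert w \<sigma>) = 0"
        proof
          fix w assume w: "w \<in> V - insert v \<sigma> - (N - \<sigma>)"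
          have "b (insert w \<sigma>) = 0"
          proof (rule ccontr)
            assume "b (insert w \<sigma>) \<noteq> 0"
            from bF[OF this] w show False by (auto simp: cl_faces_def)
          qed
          then show "eps \<sigma> w * b (insert w \<sigma>) = 0" by simp
        qed
      qed
      also have "\<dots> = cl_bd N b \<sigma>" by (simp add: bd_eps)
      also have "\<dots> = eps \<sigma> v * z (insert v \<sigma>)" using bbd vs by (simp add: lkdef)
      finally show ?thesis by (simp add: mult.assoc[symmetric] eps_sq)
    qed
    have z'eq: "z' \<tau> = (if v \<in> \<tau> then 0 else z \<tau> + b \<tau>)" for \<tau>
    proof (cases "v \<in> \<tau>")
      case True
      then have t: "\<tau> = insert v (\<tau> - {v})" by auto
      show ?thesis using bdc_in[of "\<tau> - {v}"] True t unfolding z'_def by (metis Diff_iff insertI1 add.right_inverse)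
    next
      case False
      then show ?thesis using bdc_out[OF False] by (simp add: z'_def)
    qed
    have z'ch: "cl_chain V E (Suc d) z'"
      unfolding cl_chain_def
    proof (intro allI impI)
      fix \<tau> assume "z' \<tau> \<noteq> 0"
      then have "z \<tau> \<noteq> 0 \<or> b \<tau> \<noteq> 0" by (auto simp: z'eq split: if_splits)
      then show "\<tau> \<in> cl_faces V E (Suc d)" using zch bF faces_sub[OF _ NV] by blast
    qed
    have z'bd: "cl_bd V z' = (\<lambda>_. 0)"
    proof
      fix \<tau>
      have "cl_bd V z' \<tau> = cl_bd V z \<tau> + cl_bd V (cl_bd V c) \<tau>"
        unfolding z'_def by (rule bd_add)
      moreover have "cl_bd V (cl_bd V c) = (\<lambda>_. 0)" by (rule bd_bd[OF finV]) (rule cfin)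
      ultimately show "cl_bd V z' \<tau> = 0" using zbd by simp
    qed
    have z'nb: "\<not> cl_boundary V E (Suc d) z'"
    proof
      assume "cl_boundary V E (Suc d) z'"
      then obtain b' where b'ch: "cl_chain V E (Suc (Suc d)) b'" and b'bd: "cl_bd V b' = z'"
        by (auto simp: cl_boundary_def)
      have "cl_chain V E (Suc (Suc d)) (\<lambda>\<rho>. b' \<rho> - c \<rho>)"
        using b'ch cch unfolding cl_chain_def by (metis diff_self diff_zero)
      moreover have "cl_bd V (\<lambda>\<rho>. b' \<rho> - c \<rho>) = z"
      proof
        fix \<tau>
        have "cl_bd V (\<lambda>\<rho>. b' \<rho> - c \<rho>) \<tau> = cl_bd V b' \<tau> - cl_bd V c \<tau>" by (rule bd_diff)
        then show "cl_bd V (\<lambda>\<rho>. b' \<rho> - c \<rho>) \<tau> = z \<tau>" using b'bd by (simp add: z'_def)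
      qed
      ultimately show False using znb by (auto simp: cl_boundary_def)
    qed
    have "vsupp z' \<subseteq> vsupp z - {v}"
    proof
      fix u assume "u \<in> vsupp z'"
      then obtain \<tau> where u: "u \<in> \<tau>" and nz: "z' \<tau> \<noteq> 0" by (auto simp: vsupp_def)
      then have v\<tau>: "v \<notin> \<tau>" and o: "z \<tau> \<noteq> 0 \<or> b \<tau> \<noteq> 0" by (auto simp: z'eq split: if_splits)
      from o have "u \<in> vsupp z"
      proof
        assume "z \<tau> \<noteq> 0" then show ?thesis using u by (auto simp: vsupp_def)
      next
        assume "b \<tau> \<noteq> 0" then have "\<tau> \<subseteq> N" using bF by (auto simp: cl_faces_def)
        then show ?thesis using u Nvs by auto
      qed
      then show "u \<in> vsupp z - {v}" using u v\<tau> by auto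
    qed
    then have "vsupp z' \<subset> vsupp z" using assms(3) by auto
    moreover have "nontrivial_cycle V E (Suc d) z'"
      using z'ch z'bd z'nb by (simp add: nontrivial_cycle_def cl_cycle_def)
    ultimately show False using zmin by blast
  qed
  show ?thesis
    using chain bdlk nb by (simp add: nontrivial_cycle_def cl_cycle_def N_def)
qed

end
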